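(* Let $m,n,k$ be positive integers, $A\in\mathbb{R}^{m\times n}$, $x^*\in\mathbb{R}^n$ with support $S^*$ satisfying $1\le|S^*|\le k$, $e\in\mathbb{R}^m$, $y=Ax^*+e$. Let $\mathcal{X}^0\in\mathbb{R}^n$, $\eta>0$, and let $(S^t,x^t,\mathcal{X}^t)_{t\ge0}$ be the sequence generated by SEA. Let $b^t=u^t-\eta A^T(Ax^t-y)$ and $B=\sup_{t\in\mathbb{N}}\|b^t\|_\infty$. If $$B<\frac{\eta}{2k}\min_{i\in S^*}|x^*_i|,$$ then there exists an integer $t_s\le T_{max}$ such that $S^*\subseteq S^{t_s}$, where $$T_{max}=\frac{2k\|\mathcal{X}^0\|_\infty+(k+1)\eta\min_{i\in S^*}|x^*_i|}{\eta\min_{i\in S^*}|x^*_i|-2kB}.$$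
   Context: $S^*=\{i:x^*_i\neq0\}$. For $v\in\mathbb{R}^n$, $\mathrm{largest}_k(v)$ is the set of indices of the $k$ entries of $v$ with largest absolute value (ties broken by selecting the highest indices). For $S\subseteq\{1,\dots,n\}$, $A_S$ is the submatrix of columns indexed by $S$, $v_S$ the restriction of a vector to $S$, $A_S^\dagger$ the Moore–Penrose pseudoinverse of $A_S$. SEA with initialization $\mathcal{X}^0$ and step size $\eta$ generates, for $t=0,1,2,\dots$: $S^t=\mathrm{largest}_k(\mathcal{X}^t)$; $x^t_i=0$ for $i\notin S^t$ and $x^t_{S^t}=A_{S^t}^\dagger y$; $\mathcal{X}^{t+1}=\mathcal{X}^t-\eta A^T(Ax^t-y)$. The oracle direction is $u^t\in\mathbb{R}^n$ with $u^t_i=-\eta x^*_i$ if $i\in S^*\setminus S^t$ and $u^t_i=0$ otherwise. *)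

theory Defs
  imports Complex_Main
begin

text \<open>Vectors in R^n are functions nat => real, indices 0..<n; an m x n matrix
  is a function nat => nat => real with row index < m and column index < n.\<close>

definition norm_inf :: "nat \<Rightarrow> (nat \<Rightarrow> real) \<Rightarrow> real" where
  "norm_inf n v = Max ((\<lambda>i. \<bar>v i\<bar>) ` {..<n})"

definition supp :: "nat \<Rightarrow> (nat \<Rightarrow> real) \<Rightarrow> nat set" where
  "supp n v = {i. i < n \<and> v i \<noteq> 0}"

definition beats :: "(nat \<Rightarrow> real) \<Rightarrow> nat \<Rightarrow> nat \<Rightarrow> bool" where
  "beats v j i \<longleftrightarrow> \<bar>v j\<bar> > \<bar>v i\<bar> \<or> (\<bar>v j\<bar> = \<bar>v i\<bar> \<and> j > i)"

definition largest :: "nat \<Rightarrow> nat \<Rightarrow> (nat \<Rightarrow> real) \<Rightarrow> nat set" where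
  "largest n k v = {i. i < n \<and> card {j. j < n \<and> beats v j i} < k}"

text \<open>Moore--Penrose conditions for P (columns C x rows R) being the pseudoinverse
  of M (rows R x columns C).\<close>
definition is_pinv :: "'r set \<Rightarrow> 'c set \<Rightarrow> ('r \<Rightarrow> 'c \<Rightarrow> real) \<Rightarrow> ('c \<Rightarrow> 'r \<Rightarrow> real) \<Rightarrow> bool" where
  "is_pinv R C M P \<longleftrightarrow>
     (\<forall>i\<in>R. \<forall>j\<in>C. (\<Sum>a\<in>C. \<Sum>b\<in>R. M i a * P a b * M b j) = M i j) \<and>
     (\<forall>a\<in>C. \<forall>b\<in>R. (\<Sum>i\<in>R. \<Sum>j\<in>C. P a i * M i j * P j b) = P a b) \<and>
     (\<forall>i\<in>R. \<forall>i'\<in>R. (\<Sum>a\<in>C. M i a * P a i') = (\<Sum>a\<in>C. M i' a * P a i)) \<and>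
     (\<forall>a\<in>C. \<forall>a'\<in>C. (\<Sum>i\<in>R. P a i * M i a') = (\<Sum>i\<in>R. P a' i * M i a))"

definition pinv :: "'r set \<Rightarrow> 'c set \<Rightarrow> ('r \<Rightarrow> 'c \<Rightarrow> real) \<Rightarrow> ('c \<Rightarrow> 'r \<Rightarrow> real)" where
  "pinv R C M = (SOME P. is_pinv R C M P)"

definition restricted_ls :: "nat \<Rightarrow> (nat \<Rightarrow> nat \<Rightarrow> real) \<Rightarrow> (nat \<Rightarrow> real) \<Rightarrow> nat set \<Rightarrow> (nat \<Rightarrow> real)" where
  "restricted_ls m A y S = (\<lambda>j. if j \<in> S then (\<Sum>i<m. pinv {..<m} S A j i * y i) else 0)"

definition mat_vec :: "nat \<Rightarrow> (nat \<Rightarrow> nat \<Rightarrow> real) \<Rightarrow> (nat \<Rightarrow> real) \<Rightarrow> (nat \<Rightarrow> real)" where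
  "mat_vec n A x = (\<lambda>i. \<Sum>j<n. A i j * x j)"

definition matT_vec :: "nat \<Rightarrow> (nat \<Rightarrow> nat \<Rightarrow> real) \<Rightarrow> (nat \<Rightarrow> real) \<Rightarrow> (nat \<Rightarrow> real)" where
  "matT_vec m A r = (\<lambda>j. \<Sum>i<m. A i j * r i)"

definition sea_S :: "nat \<Rightarrow> nat \<Rightarrow> (nat \<Rightarrow> real) \<Rightarrow> nat set" where
  "sea_S n k X = largest n k X"

definition sea_x :: "nat \<Rightarrow> nat \<Rightarrow> nat \<Rightarrow> (nat \<Rightarrow> nat \<Rightarrow> real) \<Rightarrow> (nat \<Rightarrow> real) \<Rightarrow> (nat \<Rightarrow> real) \<Rightarrow> (nat \<Rightarrow> real)" where
  "sea_x m n k A y X = restricted_ls m A y (sea_S n k X)"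

definition grad_step :: "nat \<Rightarrow> nat \<Rightarrow> (nat \<Rightarrow> nat \<Rightarrow> real) \<Rightarrow> (nat \<Rightarrow> real) \<Rightarrow> real \<Rightarrow> (nat \<Rightarrow> real) \<Rightarrow> (nat \<Rightarrow> real)" where
  "grad_step m n A y \<eta> x = (\<lambda>j. - \<eta> * matT_vec m A (\<lambda>i. mat_vec n A x i - y i) j)"

primrec sea_X :: "nat \<Rightarrow> nat \<Rightarrow> nat \<Rightarrow> (nat \<Rightarrow> nat \<Rightarrow> real) \<Rightarrow> (nat \<Rightarrow> real) \<Rightarrow> real \<Rightarrow> (nat \<Rightarrow> real) \<Rightarrow> nat \<Rightarrow> (nat \<Rightarrow> real)" where
  "sea_X m n k A y \<eta> X0 0 = X0"
| "sea_X m n k A y \<eta> X0 (Suc t) =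
     (\<lambda>j. sea_X m n k A y \<eta> X0 t j + grad_step m n A y \<eta> (sea_x m n k A y (sea_X m n k A y \<eta> X0 t)) j)"

definition oracle_u :: "nat \<Rightarrow> real \<Rightarrow> (nat \<Rightarrow> real) \<Rightarrow> nat set \<Rightarrow> (nat \<Rightarrow> real)" where
  "oracle_u n \<eta> xs St = (\<lambda>i. if i \<in> supp n xs - St then - \<eta> * xs i else 0)"

end

theory Submission
  imports Defs
begin

lemma norm_inf_ge: "i < n \<Longrightarrow> \<bar>v i\<bar> \<le> norm_inf n v"
  unfolding norm_inf_def by (rule Max_ge) auto

lemma norm_inf_nonneg: "0 < n \<Longrightarrow> 0 \<le> norm_inf n v"
  using norm_inf_ge[of 0 n v] by linarith

lemma beater_exists:
  fixes X :: "nat \<Rightarrow> real"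
  assumes "i \<in> supp n xs" "i \<notin> largest n k X" "card (supp n xs) \<le> k"
  shows "\<exists>j<n. j \<notin> supp n xs \<and> \<bar>X i\<bar> \<le> \<bar>X j\<bar>"
proof (rule ccontr)
  assume H: "\<not> ?thesis"
  have iN: "i < n" using assms(1) by (simp add: supp_def)
  have ge: "k \<le> card {j. j < n \<and> beats X j i}"
    using assms(2) iN by (simp add: largest_def)
  have sub: "{j. j < n \<and> beats X j i} \<subseteq> supp n xs - {i}"
  proof
    fix j assume "j \<in> {j. j < n \<and> beats X j i}"
    then have j: "j < n" "beats X j i" by auto
    then have "\<bar>X i\<bar> \<le> \<bar>X j\<bar>" "j \<noteq> i" by (auto simp: beats_def)
    with H j show "j \<in> supp n xs - {i}" by auto
  qed
  have fin: "finite (supp n xs)" by (simp add: supp_def)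
  have "card {j. j < n \<and> beats X j i} \<le> card (supp n xs - {i})"
    by (rule card_mono) (use fin sub in auto)
  also have "\<dots> = card (supp n xs) - 1" using assms(1) fin by simp
  finally show False using ge assms(3) assms(1) fin
    by (metis One_nat_def card_0_eq diff_le_self empty_iff le_antisym le_trans not_less_eq_eq Suc_pred not_gr0 diff_Suc_less less_le_not_le)
qed

theorem theoremC4:
  fixes m n k :: nat and A :: "nat \<Rightarrow> nat \<Rightarrow> real"
    and xs e y X0 :: "nat \<Rightarrow> real" and \<eta> B :: real
  defines "St \<equiv> \<lambda>t. sea_S n k (sea_X m n k A y \<eta> X0 t)"
      and "bt \<equiv> \<lambda>t. (\<lambda>i. oracle_u n \<eta> xs (sea_S n k (sea_X m n k A y \<eta> X0 t)) i + grad_step m n A y \<eta> (sea_x m n k A y (sea_X m n k A y \<eta> X0 t)) i)"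
      and "xmin \<equiv> Min ((\<lambda>i. \<bar>xs i\<bar>) ` supp n xs)"
  assumes "0 < m" and "0 < n" and "0 < k"
    and "1 \<le> card (supp n xs)" and "card (supp n xs) \<le> k"
    and "\<forall>i<m. y i = mat_vec n A xs i + e i"
    and "0 < \<eta>"
    and "bdd_above (range (\<lambda>t. norm_inf n (bt t)))"
    and "B = (SUP t. norm_inf n (bt t))"
    and "B < \<eta> / (2 * real k) * xmin"
  shows "\<exists>ts::nat. real ts \<le> (2 * real k * norm_inf n X0 + (real k + 1) * \<eta> * xmin)
                               / (\<eta> * xmin - 2 * real k * B)
                 \<and> supp n xs \<subseteq> St ts"
proof (rule ccontr)
  assume NOT: "\<not> ?thesis"
  define X where "X = sea_X m n k A y \<eta> X0"
  define M0 where "M0 = norm_inf n X0"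
  define S where "S = supp n xs"
  have finS: "finite S" by (simp add: S_def supp_def)
  have SN: "\<And>i. i \<in> S \<Longrightarrow> i < n" by (simp add: S_def supp_def)
  have Snz: "\<And>i. i \<in> S \<Longrightarrow> xs i \<noteq> 0" by (simp add: S_def supp_def)
  have Sne: "S \<noteq> {}" using assms(7) S_def by auto
  have M0: "0 \<le> M0" using norm_inf_nonneg[OF assms(5)] M0_def by simp
  have StX: "\<And>t. St t = largest n k (X t)" by (simp add: St_def X_def sea_S_def)
  have Xs: "\<And>t j. X (Suc t) j = X t j + bt t j - oracle_u n \<eta> xs (St t) j"
    by (simp add: X_def bt_def St_def)
  have bB: "\<And>t j. j < n \<Longrightarrow> \<bar>bt t j\<bar> \<le> B"
  proof -
    fix t j assume "j < n"
    then have "\<bar>bt t j\<bar> \<le> norm_inf n (bt t)" by (rule norm_inf_ge)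
    also have "\<dots> \<le> B" unfolding assms(12) by (rule cSUP_upper[OF _ assms(11)]) simp
    finally show "\<bar>bt t j\<bar> \<le> B" .
  qed
  have B0: "0 \<le> B" using bB[OF assms(5), of 0] by linarith
  have xmin_le: "\<And>i. i \<in> S \<Longrightarrow> xmin \<le> \<bar>xs i\<bar>"
    unfolding xmin_def S_def[symmetric] using finS by (intro Min_le) auto
  have xmin_pos: "0 < xmin"
  proof -
    have "xmin \<in> (\<lambda>i. \<bar>xs i\<bar>) ` S"
      unfolding xmin_def S_def[symmetric] using finS Sne by (intro Min_in) auto
    then show ?thesis using Snz by auto
  qed
  have nonsupp: "\<And>t j. j < n \<Longrightarrow> j \<notin> S \<Longrightarrow> \<bar>X t j\<bar> \<le> M0 + real t * B"
  proof -
    fix t j assume j: "j < n" "j \<notin> S"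
    show "\<bar>X t j\<bar> \<le> M0 + real t * B"
    proof (induction t)
      case 0
      then show ?case using norm_inf_ge[OF j(1), of X0] by (simp add: X_def M0_def)
    next
      case (Suc t)
      have "X (Suc t) j = X t j + bt t j" using Xs j by (simp add: oracle_u_def S_def)
      then show ?case using Suc bB[OF j(1), of t] by (simp add: algebra_simps)
    qed
  qed
  have missing_bound: "\<And>t i. i \<in> S \<Longrightarrow> i \<notin> St t \<Longrightarrow> \<bar>X t i\<bar> \<le> M0 + real t * B"
  proof -
    fix t i assume "i \<in> S" "i \<notin> St t"
    then obtain j where "j < n" "j \<notin> S" "\<bar>X t i\<bar> \<le> \<bar>X t j\<bar>"
      using beater_exists[of i n xs k "X t"] assms(8) StX S_def by auto
    then show "\<bar>X t i\<bar> \<le> M0 + real t * B" using nonsupp[of j t] by linarith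
  qed
  define N where "N = (\<lambda>i T. (\<Sum>t<T. if i \<notin> St t then 1 else 0 :: real))"
  have N0: "\<And>i T. 0 \<le> N i T" unfolding N_def by (intro sum_nonneg) auto
  have per: "\<And>i T. i \<in> S \<Longrightarrow> \<eta> * xmin * (N i T - 1) \<le> 2 * M0 + 2 * real T * B"
  proof -
    fix i T assume iS: "i \<in> S"
    define s where "s = sgn (xs i)"
    have sx: "s * xs i = \<bar>xs i\<bar>" by (cases "xs i > 0"; cases "xs i < 0") (auto simp: s_def)
    have sabs: "\<bar>s\<bar> = 1" using Snz[OF iS] by (simp add: s_def abs_sgn_eq)
    have step: "\<And>t. s * X (Suc t) i = s * X t i + s * bt t i + (if i \<notin> St t then \<eta> * \<bar>xs i\<bar> else 0)"
    proof -
      fix t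
      have "X (Suc t) i = X t i + bt t i + (if i \<notin> St t then \<eta> * xs i else 0)"
        using Xs[of t i] iS unfolding oracle_u_def S_def by auto
      then have "s * X (Suc t) i = s * X t i + s * bt t i + (if i \<notin> St t then \<eta> * (s * xs i) else 0)"
        by (simp add: algebra_simps)
      then show "s * X (Suc t) i = s * X t i + s * bt t i + (if i \<notin> St t then \<eta> * \<bar>xs i\<bar> else 0)"
        using sx by simp
    qed
    have sb: "\<And>t. \<bar>s * bt t i\<bar> \<le> B" using bB[OF SN[OF iS]] sabs by (simp add: abs_mult)
    have low: "\<And>T. s * X T i \<ge> - M0 - real T * B + \<eta> * \<bar>xs i\<bar> * N i T"
    proof -
      fix T show "s * X T i \<ge> - M0 - real T * B + \<eta> * \<bar>xs i\<bar> * N i T"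
      proof (induction T)
        case 0
        have "\<bar>s * X 0 i\<bar> \<le> M0" using norm_inf_ge[OF SN[OF iS], of X0] sabs
          by (simp add: X_def M0_def abs_mult)
        then show ?case by (simp add: N_def)
      next
        case (Suc T)
        have "N i (Suc T) = N i T + (if i \<notin> St T then 1 else 0)" by (simp add: N_def)
        then show ?case using Suc step[of T] sb[of T] by (auto simp: algebra_simps)
      qed
    qed
    have up: "\<And>T. s * X T i \<le> M0 + real T * B + \<eta> * \<bar>xs i\<bar> * min (N i T) 1"
    proof -
      fix T show "s * X T i \<le> M0 + real T * B + \<eta> * \<bar>xs i\<bar> * min (N i T) 1"
      proof (induction T)
        case 0
        have "\<bar>s * X 0 i\<bar> \<le> M0" using norm_inf_ge[OF SN[OF iS], of X0] sabs
          by (simp add: X_def M0_def abs_mult)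
        then show ?case by (simp add: N_def)
      next
        case (Suc T)
        have NS: "N i (Suc T) = N i T + (if i \<notin> St T then 1 else 0)" by (simp add: N_def)
        have e0: "0 \<le> \<eta> * \<bar>xs i\<bar>" using assms(10) by simp
        show ?case
        proof (cases "i \<in> St T")
          case True
          have "min (N i T) 1 \<le> min (N i (Suc T)) 1" using NS True by simp
          then have "\<eta> * \<bar>xs i\<bar> * min (N i T) 1 \<le> \<eta> * \<bar>xs i\<bar> * min (N i (Suc T)) 1"
            using e0 by (rule mult_left_mono)
          then show ?thesis using Suc step[of T] sb[of T] True by (auto simp: algebra_simps)
        next
          case False
          have m1: "min (N i (Suc T)) 1 = 1" using NS False N0[of i T] by simp
          have "\<bar>s * X T i\<bar> \<le> M0 + real T * B" using missing_bound[OF iS False] sabs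
            by (simp add: abs_mult)
          then show ?thesis using step[of T] sb[of T] False m1 by (auto simp: algebra_simps)
        qed
      qed
    qed
    have "\<eta> * \<bar>xs i\<bar> * (N i T - min (N i T) 1) \<le> 2 * M0 + 2 * real T * B"
      using low[of T] up[of T] by (simp add: algebra_simps)
    moreover have "\<eta> * xmin * (N i T - 1) \<le> \<eta> * \<bar>xs i\<bar> * (N i T - min (N i T) 1)"
    proof -
      have "\<eta> * xmin * (N i T - 1) \<le> \<eta> * xmin * (N i T - min (N i T) 1)"
        using xmin_pos assms(10) by (intro mult_left_mono) auto
      also have "\<dots> \<le> \<eta> * \<bar>xs i\<bar> * (N i T - min (N i T) 1)"
        using xmin_le[OF iS] assms(10) by (intro mult_right_mono mult_left_mono) auto
      finally show ?thesis .
    qed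
    ultimately show "\<eta> * xmin * (N i T - 1) \<le> 2 * M0 + 2 * real T * B" by linarith
  qed
  define D where "D = \<eta> * xmin - 2 * real k * B"
  have Dpos: "0 < D"
  proof -
    have "2 * real k * B < 2 * real k * (\<eta> / (2 * real k) * xmin)"
      using assms(13) assms(6) by (intro mult_strict_left_mono) auto
    also have "\<dots> = \<eta> * xmin" using assms(6) by simp
    finally show ?thesis by (simp add: D_def)
  qed
  define Tm where "Tm = (2 * real k * M0 + (real k + 1) * \<eta> * xmin) / D"
  have Tm0: "0 \<le> Tm" unfolding Tm_def using Dpos M0 xmin_pos assms(10)
    by (intro divide_nonneg_pos) auto
  define T where "T = nat (floor Tm) + 1"
  have Tgt: "Tm < real T" unfolding T_def using Tm0 by linarith
  have miss: "\<And>t. t < T \<Longrightarrow> \<exists>i\<in>S. i \<notin> St t"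
  proof -
    fix t assume "t < T"
    then have "real t \<le> Tm" unfolding T_def using Tm0 by linarith
    then show "\<exists>i\<in>S. i \<notin> St t" using NOT unfolding Tm_def D_def M0_def S_def by auto
  qed
  have "real T \<le> (\<Sum>i\<in>S. N i T)"
  proof -
    have "(\<Sum>i\<in>S. N i T) = (\<Sum>t<T. \<Sum>i\<in>S. if i \<notin> St t then 1 else 0 :: real)"
      unfolding N_def by (rule sum.swap)
    also have "\<dots> \<ge> (\<Sum>t<T. 1)"
    proof (rule sum_mono)
      fix t assume "t \<in> {..<T}"
      then obtain i where i: "i \<in> S" "i \<notin> St t" using miss by auto
      have "(if i \<notin> St i then 1 else 0 :: real) = (if i \<notin> St i then 1 else 0)" by simp
      have "(\<lambda>i. if i \<notin> St t then 1 else 0 :: real) i \<le> (\<Sum>i\<in>S. if i \<notin> St t then 1 else 0 :: real)"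
        by (rule member_le_sum) (use i finS in auto)
      then show "1 \<le> (\<Sum>i\<in>S. if i \<notin> St t then 1 else 0 :: real)" using i by simp
    qed
    finally show ?thesis by simp
  qed
  moreover have "(\<Sum>i\<in>S. \<eta> * xmin * (N i T - 1)) \<le> (\<Sum>i\<in>S. 2 * M0 + 2 * real T * B)"
    by (rule sum_mono) (rule per)
  ultimately have "\<eta> * xmin * (real T - real (card S)) \<le> real (card S) * (2 * M0 + 2 * real T * B)"
  proof -
    assume a: "real T \<le> (\<Sum>i\<in>S. N i T)"
      and b: "(\<Sum>i\<in>S. \<eta> * xmin * (N i T - 1)) \<le> (\<Sum>i\<in>S. 2 * M0 + 2 * real T * B)"
    have "(\<Sum>i\<in>S. \<eta> * xmin * (N i T - 1)) = \<eta> * xmin * ((\<Sum>i\<in>S. N i T) - real (card S))"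
      by (simp add: sum_distrib_left[symmetric] sum_subtractf)
    moreover have "\<eta> * xmin * (real T - real (card S)) \<le> \<eta> * xmin * ((\<Sum>i\<in>S. N i T) - real (card S))"
      using a xmin_pos assms(10) by (intro mult_left_mono) auto
    ultimately show ?thesis using b by simp
  qed
  then have c1: "\<eta> * xmin * real T \<le> real (card S) * (2 * M0 + 2 * real T * B + \<eta> * xmin)"
    by (simp add: algebra_simps)
  have "real (card S) * (2 * M0 + 2 * real T * B + \<eta> * xmin) \<le> real k * (2 * M0 + 2 * real T * B + \<eta> * xmin)"
    using assms(8) M0 B0 xmin_pos assms(10) unfolding S_def
    by (intro mult_right_mono) auto
  with c1 have "real T * D \<le> 2 * real k * M0 + real k * \<eta> * xmin"
    unfolding D_def by (simp add: algebra_simps)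
  moreover have "2 * real k * M0 + (real k + 1) * \<eta> * xmin < real T * D"
  proof -
    have "Tm * D < real T * D" using Tgt Dpos by simp
    then show ?thesis unfolding Tm_def using Dpos by simp
  qed
  moreover have "0 < \<eta> * xmin" using xmin_pos assms(10) by simp
  ultimately show False by (simp add: algebra_simps)
qed

end
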